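(* Let $\{B^i\}_{i=1}^N$ be complex $n\times n$ matrices and $L\in\mathbb N$. If both $\{B^{i_1}\cdots B^{i_L}:\sum_{k}|i_k|\equiv0\pmod 2\}$ and $\{B^{i_1}\cdots B^{i_L}:\sum_k|i_k|\equiv1\pmod2\}$ span $\mathrm M_n(\mathbb C)$ as vector spaces, then both $\{B^{i_1}\cdots B^{i_{L+1}}:\sum_{k}|i_k|\equiv0\}$ and $\{B^{i_1}\cdots B^{i_{L+1}}:\sum_k|i_k|\equiv1\}$ span $\mathrm M_n(\mathbb C)$.
   Context: $i\mapsto|i|\in\{0,1\}$ is a fixed parity function on $\{1,\dots,N\}$. *)

theory Defs
  imports "HOL-Analysis.Analysis"
begin

definition cmat_scale :: "complex \<Rightarrow> complex^'n^'n \<Rightarrow> complex^'n^'n" where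
  "cmat_scale c A = (\<chi> i j. c * A $ i $ j)"

definition cspan :: "(complex^'n^'n) set \<Rightarrow> (complex^'n^'n) set" where
  "cspan S = module.span cmat_scale S"

definition word_prod :: "(nat \<Rightarrow> complex^'n^'n) \<Rightarrow> nat list \<Rightarrow> complex^'n^'n" where
  "word_prod B ws = foldr (\<lambda>i M. B i ** M) ws (mat 1)"

definition parity_products ::
  "(nat \<Rightarrow> complex^'n^'n) \<Rightarrow> nat \<Rightarrow> (nat \<Rightarrow> nat) \<Rightarrow> nat \<Rightarrow> nat \<Rightarrow> (complex^'n^'n) set" where
  "parity_products B N par L r =
     {word_prod B ws | ws. length ws = L \<and> set ws \<subseteq> {1..N} \<and> (\<Sum>i\<leftarrow>ws. par i) mod 2 = r}"

end

theory Submission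
  imports Defs
begin

lemma cmat_module: "module (cmat_scale :: complex \<Rightarrow> complex^'n^'n \<Rightarrow> _)"
  by unfold_locales (auto simp: cmat_scale_def vec_eq_iff algebra_simps)

lemma scale_rmul: "cmat_scale c (Y::complex^'n^'n) ** A = cmat_scale c (Y ** A)"
  by (simp add: cmat_scale_def vec_eq_iff matrix_matrix_mult_def sum_distrib_left mult.assoc)

lemma scale_lmul: "(A::complex^'n^'n) ** cmat_scale c Y = cmat_scale c (A ** Y)"
  by (simp add: cmat_scale_def vec_eq_iff matrix_matrix_mult_def sum_distrib_left algebra_simps)

lemma matrix_add_rdistrib': "((B + C) ** (A::complex^'n^'n)) = (B ** A) + (C ** A)"
  by (simp add: vec_eq_iff matrix_matrix_mult_def sum.distrib algebra_simps)

lemma matrix_zero_mul': "(0::complex^'n^'n) ** A = 0"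
  by (simp add: vec_eq_iff matrix_matrix_mult_def)

lemma matrix_mul_zero': "(A::complex^'n^'n) ** 0 = 0"
  by (simp add: vec_eq_iff matrix_matrix_mult_def)

lemma cspan_lmul:
  assumes "(X::complex^'n^'n) \<in> cspan S"
  shows "M ** X \<in> cspan ((\<lambda>W. M ** W) ` S)"
proof -
  interpret module "cmat_scale :: complex \<Rightarrow> complex^'n^'n \<Rightarrow> _" by (rule cmat_module)
  have "span S \<subseteq> {X. M ** X \<in> span ((\<lambda>W. M ** W) ` S)}"
    apply (rule span_minimal)
     apply (auto intro: span_base)[1]
    apply (auto simp: subspace_def matrix_add_ldistrib matrix_mul_zero' scale_lmul intro: span_add span_scale span_zero)
    done
  then show ?thesis using assms by (auto simp: cspan_def)
qed

theorem mainTheorem5: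
  fixes B :: "nat \<Rightarrow> complex^'n^'n" and N L :: nat and par :: "nat \<Rightarrow> nat"
  assumes par01: "\<forall>i\<in>{1..N}. par i \<in> {0, 1}"
    and even_span: "cspan (parity_products B N par L 0) = UNIV"
    and odd_span: "cspan (parity_products B N par L 1) = UNIV"
  shows "cspan (parity_products B N par (L + 1) 0) = UNIV
       \<and> cspan (parity_products B N par (L + 1) 1) = UNIV"
proof -
  interpret module "cmat_scale :: complex \<Rightarrow> complex^'n^'n \<Rightarrow> _" by (rule cmat_module)
  define Q where "Q = {Y::complex^'n^'n. \<forall>A r. r \<in> {0,1::nat} \<longrightarrow>
      Y ** A \<in> cspan (parity_products B N par (L + 1) r)}"
  have sub: "subspace Q"
    unfolding subspace_def Q_def cspan_def
    by (auto simp: matrix_add_rdistrib' matrix_zero_mul' scale_rmul intro: span_add span_scale span_zero)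
  have gen: "parity_products B N par L 1 \<subseteq> Q"
  proof
    fix W assume "W \<in> parity_products B N par L 1"
    then obtain ws where ws: "W = word_prod B ws" "length ws = L" "set ws \<subseteq> {1..N}"
      "(\<Sum>i\<leftarrow>ws. par i) mod 2 = 1" by (auto simp: parity_products_def)
    then obtain i ws' where ii: "ws = i # ws'" by (cases ws) auto
    have W: "W = B i ** word_prod B ws'" using ws ii by (simp add: word_prod_def)
    show "W \<in> Q" unfolding Q_def
    proof (intro CollectI allI impI)
      fix A and r :: nat assume r: "r \<in> {0,1}"
      define s where "s = (r + par i) mod 2"
      have "s \<in> {0,1}" unfolding s_def by auto
      then have "word_prod B ws' ** A \<in> cspan (parity_products B N par L s)"
        using even_span odd_span by auto
      then have "B i ** (word_prod B ws' ** A)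
          \<in> cspan ((\<lambda>X. B i ** X) ` parity_products B N par L s)"
        by (rule cspan_lmul)
      moreover have "(\<lambda>X. B i ** X) ` parity_products B N par L s
          \<subseteq> parity_products B N par (L + 1) r"
      proof
        fix Z assume "Z \<in> (\<lambda>X. B i ** X) ` parity_products B N par L s"
        then obtain vs where vs: "Z = B i ** word_prod B vs" "length vs = L"
          "set vs \<subseteq> {1..N}" "(\<Sum>j\<leftarrow>vs. par j) mod 2 = s"
          by (auto simp: parity_products_def)
        have "(par i + (\<Sum>j\<leftarrow>vs. par j)) mod 2 = r"
          proof -
          have "(par i + (\<Sum>j\<leftarrow>vs. par j)) mod 2 = (par i + s) mod 2"
            using vs(4) by (metis mod_add_right_eq)
          also have "\<dots> = (par i + (r + par i)) mod 2" unfolding s_def by (simp add: mod_add_right_eq)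
          also have "\<dots> = r" using r by auto presburger
          finally show ?thesis .
        qed
        then show "Z \<in> parity_products B N par (L + 1) r"
          unfolding parity_products_def using vs ws ii
          by (intro CollectI exI[of _ "i # vs"]) (auto simp: word_prod_def)
      qed
      ultimately show "W ** A \<in> cspan (parity_products B N par (L + 1) r)"
        using W span_mono unfolding cspan_def by (metis matrix_mul_assoc subsetD)
    qed
  qed
  have "cspan (parity_products B N par L 1) \<subseteq> Q"
    unfolding cspan_def by (rule span_minimal[OF gen sub])
  then have "mat 1 \<in> Q" using odd_span by auto
  then show ?thesis unfolding Q_def by auto
qed

end
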